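(* Let $(\Omega,\mathcal{F},\mathbb{P})$ be a nonatomic probability space and let $(\Phi,\Psi)$ be an Orlicz pair as in the context. The following statements are equivalent: (1a) every proper, convex, law-invariant functional $\rho:L^\Phi\to(-\infty,\infty]$ that is norm lower semicontinuous (with respect to $\|\cdot\|_\Phi$) has the Fatou property; (1b) every proper, quasiconvex, law-invariant functional $\rho:L^\Phi\to(-\infty,\infty]$ that is norm lower semicontinuous has the Fatou property; (2) $\Phi$ satisfies the $\Delta_2$ condition.
   Context: $(\Omega,\mathcal{F},\mathbb{P})$ is a nonatomic probability space; random variables are identified up to a.s. equality. An Orlicz function is a convex, increasing $\Phi:[0,\infty)\to[0,\infty)$ with $\Phi(0)=0$; its conjugate is $\Psi(s)=\sup_{t\ge0}(ts-\Phi(t))$. Standing assumption: $\Phi(t)>0$ for $t>0$ and $\lim_{t\to\infty}\Phi(t)/t=\infty$. $L^\Phi$ is the space of random variables $X$ with $\|X\|_\Phi:=\inf\{\lambda>0:\mathbb{E}[\Phi(|X|/\lambda)]\le 1\}<\infty$ (a Banach space with this norm). $\Phi$ is $\Delta_2$ if there exist $t_0\in(0,\infty)$ and $k\in\mathbb{R}$ with $\Phi(2t)<k\Phi(t)$ for all $t\ge t_0$. A functional is proper if not identically $\infty$; quasiconvex if all sublevel sets $\{\rho\le\lambda\}$ are convex; law-invariant if $\rho(X)=\rho(Y)$ whenever $X,Y$ have the same law. $\rho$ has the Fatou property if whenever $X_n\to X$ a.s. and $|X_n|\le Y$ for some $Y\in L^\Phi$ and all $n$, then $\rho(X)\le\liminf_n\rho(X_n)$.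 *)

theory Defs
  imports "HOL-Probability.Probability"
begin

definition nonatomic :: "'a measure \<Rightarrow> bool" where
  "nonatomic M \<longleftrightarrow> (\<forall>A\<in>sets M. measure M A > 0 \<longrightarrow>
      (\<exists>B\<in>sets M. B \<subseteq> A \<and> 0 < measure M B \<and> measure M B < measure M A))"

definition orlicz_function :: "(real \<Rightarrow> real) \<Rightarrow> bool" where
  "orlicz_function \<Phi> \<longleftrightarrow> convex_on {0..} \<Phi> \<and> mono_on {0..} \<Phi> \<and> \<Phi> 0 = 0
     \<and> (\<forall>t>0. \<Phi> t > 0) \<and> filterlim (\<lambda>t. \<Phi> t / t) at_top at_top"

definition orlicz_conjugate :: "(real \<Rightarrow> real) \<Rightarrow> real \<Rightarrow> real" where
  "orlicz_conjugate \<Phi> s = (SUP t\<in>{0..}. t * s - \<Phi> t)"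

definition orlicz_set :: "'a measure \<Rightarrow> (real \<Rightarrow> real) \<Rightarrow> ('a \<Rightarrow> real) \<Rightarrow> real set" where
  "orlicz_set M \<Phi> X = {c. c > 0 \<and> (\<integral>\<^sup>+ \<omega>. ennreal (\<Phi> (\<bar>X \<omega>\<bar> / c)) \<partial>M) \<le> 1}"

definition orlicz_space :: "'a measure \<Rightarrow> (real \<Rightarrow> real) \<Rightarrow> ('a \<Rightarrow> real) set" where
  "orlicz_space M \<Phi> = {X. X \<in> borel_measurable M \<and> orlicz_set M \<Phi> X \<noteq> {}}"

definition orlicz_norm :: "'a measure \<Rightarrow> (real \<Rightarrow> real) \<Rightarrow> ('a \<Rightarrow> real) \<Rightarrow> real" where
  "orlicz_norm M \<Phi> X = Inf (orlicz_set M \<Phi> X)"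

definition Delta2 :: "(real \<Rightarrow> real) \<Rightarrow> bool" where
  "Delta2 \<Phi> \<longleftrightarrow> (\<exists>t0>0. \<exists>k::real. \<forall>t\<ge>t0. \<Phi> (2 * t) < k * \<Phi> t)"

text \<open>Properties of functionals rho on L^Phi with values in (-oo, oo]; only values on L^Phi matter.\<close>
definition proper_on :: "('a \<Rightarrow> real) set \<Rightarrow> (('a \<Rightarrow> real) \<Rightarrow> ereal) \<Rightarrow> bool" where
  "proper_on L \<rho> \<longleftrightarrow> (\<forall>X\<in>L. \<rho> X \<noteq> -\<infinity>) \<and> (\<exists>X\<in>L. \<rho> X \<noteq> \<infinity>)"

definition convex_functional :: "('a \<Rightarrow> real) set \<Rightarrow> (('a \<Rightarrow> real) \<Rightarrow> ereal) \<Rightarrow> bool" where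
  "convex_functional L \<rho> \<longleftrightarrow> (\<forall>X\<in>L. \<forall>Y\<in>L. \<forall>t::real. 0 < t \<and> t < 1 \<longrightarrow>
      \<rho> (\<lambda>\<omega>. t * X \<omega> + (1 - t) * Y \<omega>) \<le> ereal t * \<rho> X + ereal (1 - t) * \<rho> Y)"

definition quasiconvex_functional :: "('a \<Rightarrow> real) set \<Rightarrow> (('a \<Rightarrow> real) \<Rightarrow> ereal) \<Rightarrow> bool" where
  "quasiconvex_functional L \<rho> \<longleftrightarrow> (\<forall>c::real. \<forall>X\<in>L. \<forall>Y\<in>L. \<forall>t::real.
      \<rho> X \<le> ereal c \<and> \<rho> Y \<le> ereal c \<and> 0 \<le> t \<and> t \<le> 1 \<longrightarrow>
      \<rho> (\<lambda>\<omega>. t * X \<omega> + (1 - t) * Y \<omega>) \<le> ereal c)"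

definition law_invariant :: "'a measure \<Rightarrow> ('a \<Rightarrow> real) set \<Rightarrow> (('a \<Rightarrow> real) \<Rightarrow> ereal) \<Rightarrow> bool" where
  "law_invariant M L \<rho> \<longleftrightarrow> (\<forall>X\<in>L. \<forall>Y\<in>L. distr M borel X = distr M borel Y \<longrightarrow> \<rho> X = \<rho> Y)"

definition norm_lsc :: "'a measure \<Rightarrow> (real \<Rightarrow> real) \<Rightarrow> (('a \<Rightarrow> real) \<Rightarrow> ereal) \<Rightarrow> bool" where
  "norm_lsc M \<Phi> \<rho> \<longleftrightarrow> (\<forall>Xs X. (\<forall>n. Xs n \<in> orlicz_space M \<Phi>) \<longrightarrow> X \<in> orlicz_space M \<Phi> \<longrightarrow>
      (\<lambda>n. orlicz_norm M \<Phi> (\<lambda>\<omega>. Xs n \<omega> - X \<omega>)) \<longlonglongrightarrow> 0 \<longrightarrow>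
      \<rho> X \<le> liminf (\<lambda>n. \<rho> (Xs n)))"

definition fatou_property :: "'a measure \<Rightarrow> (real \<Rightarrow> real) \<Rightarrow> (('a \<Rightarrow> real) \<Rightarrow> ereal) \<Rightarrow> bool" where
  "fatou_property M \<Phi> \<rho> \<longleftrightarrow> (\<forall>Xs X Y. (\<forall>n. Xs n \<in> orlicz_space M \<Phi>) \<longrightarrow> X \<in> orlicz_space M \<Phi> \<longrightarrow>
      Y \<in> orlicz_space M \<Phi> \<longrightarrow>
      (AE \<omega> in M. (\<lambda>n. Xs n \<omega>) \<longlonglongrightarrow> X \<omega>) \<longrightarrow>
      (\<forall>n. AE \<omega> in M. \<bar>Xs n \<omega>\<bar> \<le> Y \<omega>) \<longrightarrow>
      \<rho> X \<le> liminf (\<lambda>n. \<rho> (Xs n)))"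

end

theory Submission
  imports Defs
begin


lemma phi_mono:
  assumes "orlicz_function \<Phi>" "0 \<le> x" "x \<le> y"
  shows "\<Phi> x \<le> \<Phi> y"
  using assms unfolding orlicz_function_def by (auto intro: mono_onD)

lemma phi_nonneg:
  assumes "orlicz_function \<Phi>" "0 \<le> x"
  shows "0 \<le> \<Phi> x"
  using phi_mono[OF assms(1) order_refl assms(2)] assms(1) unfolding orlicz_function_def by simp

lemma phi_scale:
  assumes "orlicz_function \<Phi>" "0 \<le> s" "0 \<le> m" "m \<le> 1"
  shows "\<Phi> (m * s) \<le> m * \<Phi> s"
proof -
  have c: "convex_on {0..} \<Phi>" and z: "\<Phi> 0 = 0" using assms(1) unfolding orlicz_function_def by auto
  have "\<Phi> ((1 - m) *\<^sub>R 0 + m *\<^sub>R s) \<le> (1 - m) * \<Phi> 0 + m * \<Phi> s"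
    by (rule convex_onD[OF c]) (use assms in auto)
  then show ?thesis using z by simp
qed

lemma phi_max:
  assumes "orlicz_function \<Phi>" "0 \<le> a" "0 \<le> b"
  shows "\<Phi> (max a b) \<le> \<Phi> a + \<Phi> b"
  using phi_nonneg[OF assms(1) assms(2)] phi_nonneg[OF assms(1) assms(3)]
  by (cases "a \<le> b") (auto simp: max_def)

lemma phi_borel:
  assumes "orlicz_function \<Phi>"
  shows "(\<lambda>x. \<Phi> (max 0 x)) \<in> borel_measurable borel"
proof (rule borel_measurable_mono)
  show "mono (\<lambda>x. \<Phi> (max 0 x))"
    by (rule monoI) (auto intro!: phi_mono[OF assms] simp: max_def)
qed

lemma phi_meas:
  assumes "orlicz_function \<Phi>" "f \<in> borel_measurable M" "c > 0"
  shows "(\<lambda>\<omega>. \<Phi> (\<bar>f \<omega>\<bar> / c)) \<in> borel_measurable M"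
proof -
  have "(\<lambda>\<omega>. \<Phi> (max 0 (\<bar>f \<omega>\<bar> / c))) \<in> borel_measurable M"
    using measurable_compose[OF _ phi_borel[OF assms(1)], of "\<lambda>\<omega>. \<bar>f \<omega>\<bar> / c"] assms(2) by simp
  moreover have "\<And>\<omega>. max 0 (\<bar>f \<omega>\<bar> / c) = \<bar>f \<omega>\<bar> / c" using assms(3) by auto
  ultimately show ?thesis by simp
qed

lemma phi_meas_gen:
  assumes "orlicz_function \<Phi>" "g \<in> borel_measurable M" "\<And>\<omega>. 0 \<le> g \<omega>"
  shows "(\<lambda>\<omega>. \<Phi> (g \<omega>)) \<in> borel_measurable M"
proof -
  have "(\<lambda>\<omega>. \<Phi> (max 0 (g \<omega>))) \<in> borel_measurable M"
    using measurable_compose[OF _ phi_borel[OF assms(1)], of g] assms(2) by simp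
  moreover have "\<And>\<omega>. max 0 (g \<omega>) = g \<omega>" using assms(3) by auto
  ultimately show ?thesis by simp
qed

lemma phi_large:
  assumes "orlicz_function \<Phi>"
  obtains T where "T \<ge> 1" "\<And>t. t \<ge> T \<Longrightarrow> \<Phi> t \<ge> 1"
proof -
  have "filterlim (\<lambda>t. \<Phi> t / t) at_top at_top" using assms unfolding orlicz_function_def by auto
  then have "eventually (\<lambda>t. \<Phi> t / t \<ge> 1) at_top" by (simp add: filterlim_at_top)
  then obtain T0 where T0: "\<And>t. t \<ge> T0 \<Longrightarrow> \<Phi> t / t \<ge> 1" by (auto simp: eventually_at_top_linorder)
  show ?thesis
  proof (rule that[of "max 1 T0"])
    fix t assume "t \<ge> max 1 T0"
    then have "t \<ge> 1" "T0 \<le> t" by auto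
    then have "t \<ge> 1" "\<Phi> t / t \<ge> 1" using T0[of t] by auto
    then have "1 * t \<le> \<Phi> t / t * t" by (intro mult_right_mono) auto
    then have "t \<le> \<Phi> t" using \<open>t \<ge> 1\<close> by simp
    then show "\<Phi> t \<ge> 1" using \<open>t \<ge> 1\<close> by linarith
  qed simp
qed

lemma delta2_iter:
  assumes "orlicz_function \<Phi>" "t0 > 0" "\<And>t. t \<ge> t0 \<Longrightarrow> \<Phi> (2 * t) < k * \<Phi> t" "s \<ge> t0"
  shows "\<Phi> (2 ^ m * s) \<le> k ^ m * \<Phi> s"
proof (induction m)
  case 0 then show ?case by simp
next
  case (Suc m)
  have kpos: "k > 0"
  proof -
    have "0 \<le> \<Phi> (2 * t0)" using phi_nonneg[OF assms(1)] assms(2) by simp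
    moreover have "\<Phi> t0 > 0" using assms(1,2) unfolding orlicz_function_def by auto
    ultimately show ?thesis using assms(3)[of t0]
      by (smt (verit, best) mult_nonpos_nonneg)
  qed
  have "2 ^ m * s \<ge> t0" using assms(4) assms(2)
    by (smt (verit, ccfv_SIG) mult_le_cancel_right1 one_le_power)
  then have "\<Phi> (2 * (2 ^ m * s)) < k * \<Phi> (2 ^ m * s)" by (rule assms(3))
  also have "\<dots> \<le> k * (k ^ m * \<Phi> s)" using Suc kpos by simp
  finally show ?case by (simp add: mult.assoc)
qed

lemma delta2_bound:
  assumes "orlicz_function \<Phi>" "t0 > 0" "\<And>t. t \<ge> t0 \<Longrightarrow> \<Phi> (2 * t) < k * \<Phi> t" "s \<ge> 0"
  shows "\<Phi> (2 ^ m * s) \<le> \<bar>k\<bar> ^ m * \<Phi> s + \<Phi> (2 ^ m * t0)"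
proof (cases "s \<ge> t0")
  case True
  have "\<Phi> (2 ^ m * s) \<le> k ^ m * \<Phi> s" by (rule delta2_iter[OF assms(1-3) True])
  also have "\<dots> \<le> \<bar>k\<bar> ^ m * \<Phi> s"
  proof -
    have "k ^ m \<le> \<bar>k\<bar> ^ m" by (metis abs_ge_self power_abs)
    then show ?thesis using phi_nonneg[OF assms(1) assms(4)] by (rule mult_right_mono)
  qed
  finally show ?thesis using phi_nonneg[OF assms(1), of "2^m*t0"] assms(2) by simp
next
  case False
  then have "\<Phi> (2 ^ m * s) \<le> \<Phi> (2 ^ m * t0)" using assms(4) by (intro phi_mono[OF assms(1)]) auto
  then show ?thesis using phi_nonneg[OF assms(1) assms(4)] by (simp add: add_increasing)
qed




lemma phi_tendsto0:
  assumes "orlicz_function \<Phi>" "g \<longlonglongrightarrow> 0" "\<And>n. 0 \<le> g n"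
  shows "(\<lambda>n. \<Phi> (g n)) \<longlonglongrightarrow> 0"
proof (rule tendsto_sandwich[of "\<lambda>_. 0" _ _ "\<lambda>n. g n * \<Phi> 1"])
  show "eventually (\<lambda>n. 0 \<le> \<Phi> (g n)) sequentially"
    using phi_nonneg[OF assms(1) assms(3)] by simp
  have "eventually (\<lambda>n. g n < 1) sequentially" using order_tendstoD(2)[OF assms(2)] by simp
  then show "eventually (\<lambda>n. \<Phi> (g n) \<le> g n * \<Phi> 1) sequentially"
  proof eventually_elim
    case (elim n)
    then show ?case using phi_scale[OF assms(1), of 1 "g n"] assms(3)[of n] by simp
  qed
  show "(\<lambda>n. g n * \<Phi> 1) \<longlonglongrightarrow> 0" using tendsto_mult[OF assms(2) tendsto_const[of "\<Phi> 1"]] by simp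
qed simp

lemma delta2_finite:
  assumes "orlicz_function \<Phi>" "Delta2 \<Phi>" "prob_space M" "Y \<in> orlicz_space M \<Phi>" "l > 0"
  shows "(\<integral>\<^sup>+ \<omega>. ennreal (\<Phi> (l * \<bar>Y \<omega>\<bar>)) \<partial>M) < \<infinity>"
proof -
  interpret prob_space M by fact
  obtain c where c: "c > 0" "(\<integral>\<^sup>+ \<omega>. ennreal (\<Phi> (\<bar>Y \<omega>\<bar> / c)) \<partial>M) \<le> 1"
    and Ym: "Y \<in> borel_measurable M"
    using assms(4) unfolding orlicz_space_def orlicz_set_def by auto
  obtain t0 k where t0: "t0 > 0" "\<And>t. t \<ge> t0 \<Longrightarrow> \<Phi> (2 * t) < k * \<Phi> t"
    using assms(2) unfolding Delta2_def by auto
  obtain m where m: "l * c < 2 ^ m" using real_arch_pow[of 2 "l * c"] by auto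
  have pt: "\<Phi> (l * \<bar>Y \<omega>\<bar>) \<le> \<bar>k\<bar> ^ m * \<Phi> (\<bar>Y \<omega>\<bar> / c) + \<Phi> (2 ^ m * t0)" for \<omega>
  proof -
    have "l * \<bar>Y \<omega>\<bar> = (l * c) * (\<bar>Y \<omega>\<bar> / c)" using c by simp
    also have "\<dots> \<le> 2 ^ m * (\<bar>Y \<omega>\<bar> / c)" using m c by (intro mult_right_mono) auto
    finally have "\<Phi> (l * \<bar>Y \<omega>\<bar>) \<le> \<Phi> (2 ^ m * (\<bar>Y \<omega>\<bar> / c))"
      using assms(5) by (intro phi_mono[OF assms(1)]) auto
    also have "\<dots> \<le> \<bar>k\<bar> ^ m * \<Phi> (\<bar>Y \<omega>\<bar> / c) + \<Phi> (2 ^ m * t0)"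
      by (rule delta2_bound[OF assms(1) t0]) (use c in auto)
    finally show ?thesis .
  qed
  have "(\<integral>\<^sup>+ \<omega>. ennreal (\<Phi> (l * \<bar>Y \<omega>\<bar>)) \<partial>M)
      \<le> (\<integral>\<^sup>+ \<omega>. ennreal (\<bar>k\<bar> ^ m) * ennreal (\<Phi> (\<bar>Y \<omega>\<bar> / c)) + ennreal (\<Phi> (2 ^ m * t0)) \<partial>M)"
  proof (rule nn_integral_mono)
    fix \<omega>
    have "ennreal (\<Phi> (l * \<bar>Y \<omega>\<bar>)) \<le> ennreal (\<bar>k\<bar> ^ m * \<Phi> (\<bar>Y \<omega>\<bar> / c) + \<Phi> (2 ^ m * t0))"
      using pt by (rule ennreal_leI)
    also have "\<dots> = ennreal (\<bar>k\<bar> ^ m) * ennreal (\<Phi> (\<bar>Y \<omega>\<bar> / c)) + ennreal (\<Phi> (2 ^ m * t0))"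
      using phi_nonneg[OF assms(1), of "\<bar>Y \<omega>\<bar> / c"] phi_nonneg[OF assms(1), of "2 ^ m * t0"] c t0
      by (simp add: ennreal_plus ennreal_mult)
    finally show "ennreal (\<Phi> (l * \<bar>Y \<omega>\<bar>)) \<le> \<dots>" .
  qed
  also have "\<dots> = ennreal (\<bar>k\<bar> ^ m) * (\<integral>\<^sup>+ \<omega>. ennreal (\<Phi> (\<bar>Y \<omega>\<bar> / c)) \<partial>M)
       + ennreal (\<Phi> (2 ^ m * t0)) * emeasure M (space M)"
    using phi_meas[OF assms(1) Ym c(1)]
    by (subst nn_integral_add) (auto simp: nn_integral_cmult)
  also have "\<dots> < \<infinity>"
  proof -
    have i: "(\<integral>\<^sup>+ \<omega>. ennreal (\<Phi> (\<bar>Y \<omega>\<bar> / c)) \<partial>M) < \<top>"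
      using c(2) by (meson ennreal_one_less_top le_less_trans)
    show ?thesis using i by (simp add: emeasure_space_1 ennreal_mult_less_top)
  qed
  finally show ?thesis .
qed

lemma orlicz_norm_le:
  assumes "e \<in> orlicz_set M \<Phi> X"
  shows "0 \<le> orlicz_norm M \<Phi> X" "orlicz_norm M \<Phi> X \<le> e"
proof -
  have bdd: "bdd_below (orlicz_set M \<Phi> X)" unfolding orlicz_set_def
    by (rule bdd_belowI[of _ 0]) auto
  show "orlicz_norm M \<Phi> X \<le> e" unfolding orlicz_norm_def by (rule cInf_lower[OF assms bdd])
  show "0 \<le> orlicz_norm M \<Phi> X" unfolding orlicz_norm_def
    using assms by (intro cInf_greatest) (auto simp: orlicz_set_def)
qed

lemma delta2_conv:
  assumes Phi: "orlicz_function \<Phi>" and D: "Delta2 \<Phi>" and P: "prob_space M"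
    and Xs: "\<And>n. Xs n \<in> orlicz_space M \<Phi>" and X: "X \<in> orlicz_space M \<Phi>" and Y: "Y \<in> orlicz_space M \<Phi>"
    and lim: "AE \<omega> in M. (\<lambda>n. Xs n \<omega>) \<longlonglongrightarrow> X \<omega>"
    and bnd: "\<forall>n. AE \<omega> in M. \<bar>Xs n \<omega>\<bar> \<le> Y \<omega>"
  shows "(\<lambda>n. orlicz_norm M \<Phi> (\<lambda>\<omega>. Xs n \<omega> - X \<omega>)) \<longlonglongrightarrow> 0"
proof (rule tendstoI)
  fix r :: real assume r: "r > 0"
  define e where "e = r / 2"
  have e: "e > 0" using r by (simp add: e_def)
  have Xsm: "\<And>n. Xs n \<in> borel_measurable M" and Xm: "X \<in> borel_measurable M" and Ym: "Y \<in> borel_measurable M"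
    using Xs X Y by (auto simp: orlicz_space_def)
  define u where "u n \<omega> = \<Phi> (\<bar>Xs n \<omega> - X \<omega>\<bar> / e)" for n \<omega>
  define w where "w \<omega> = \<Phi> ((2 / e) * \<bar>Y \<omega>\<bar>)" for \<omega>
  have um: "u n \<in> borel_measurable M" for n
    unfolding u_def using Xsm Xm by (intro phi_meas[OF Phi _ e]) auto
  have wm: "w \<in> borel_measurable M"
    unfolding w_def using Ym e by (intro phi_meas_gen[OF Phi]) auto
  have wfin: "(\<integral>\<^sup>+ \<omega>. ennreal (w \<omega>) \<partial>M) < \<infinity>"
    unfolding w_def using delta2_finite[OF Phi D P Y, of "2/e"] e by simp
  have allb: "AE \<omega> in M. \<forall>n. \<bar>Xs n \<omega>\<bar> \<le> Y \<omega>" using bnd by (simp add: AE_all_countable)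
  have AEX: "AE \<omega> in M. \<bar>X \<omega>\<bar> \<le> Y \<omega>"
    using allb lim
  proof eventually_elim
    case (elim \<omega>)
    show ?case
      by (rule LIMSEQ_le_const2[OF tendsto_rabs[OF elim(2)]]) (use elim(1) in auto)
  qed
  have ub: "AE \<omega> in M. norm (u n \<omega>) \<le> w \<omega>" for n
    using allb AEX
  proof eventually_elim
    case (elim \<omega>)
    have "\<bar>Xs n \<omega> - X \<omega>\<bar> / e \<le> (2 / e) * \<bar>Y \<omega>\<bar>"
      using elim(1)[rule_format, of n] elim(2) e by (simp add: divide_simps)
    then have "u n \<omega> \<le> w \<omega>" unfolding u_def w_def using e by (intro phi_mono[OF Phi]) auto
    moreover have "0 \<le> u n \<omega>" unfolding u_def using e by (intro phi_nonneg[OF Phi]) auto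
    ultimately show ?case by simp
  qed
  have ulim: "AE \<omega> in M. (\<lambda>n. u n \<omega>) \<longlonglongrightarrow> 0"
    using lim
  proof eventually_elim
    case (elim \<omega>)
    have "(\<lambda>n. \<bar>Xs n \<omega> - X \<omega>\<bar> / e) \<longlonglongrightarrow> \<bar>X \<omega> - X \<omega>\<bar> / e"
      using e by (intro tendsto_intros elim) auto
    then show ?case unfolding u_def using e by (intro phi_tendsto0[OF Phi]) auto
  qed
  have "(\<lambda>i. \<integral>\<^sup>+ \<omega>. ennreal (norm (0 - u i \<omega>)) \<partial>M) \<longlonglongrightarrow> 0"
    by (rule nn_integral_dominated_convergence_norm[OF um _ wm ub wfin ulim]) simp
  then have "eventually (\<lambda>i. (\<integral>\<^sup>+ \<omega>. ennreal (norm (0 - u i \<omega>)) \<partial>M) < 1) sequentially"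
    by (rule order_tendstoD) simp
  then show "eventually (\<lambda>n. dist (orlicz_norm M \<Phi> (\<lambda>\<omega>. Xs n \<omega> - X \<omega>)) 0 < r) sequentially"
  proof eventually_elim
    case (elim n)
    have "\<And>\<omega>. norm (0 - u n \<omega>) = \<Phi> (\<bar>Xs n \<omega> - X \<omega>\<bar> / e)"
      unfolding u_def using e phi_nonneg[OF Phi] by simp
    then have "e \<in> orlicz_set M \<Phi> (\<lambda>\<omega>. Xs n \<omega> - X \<omega>)"
      using elim e unfolding orlicz_set_def by simp
    from orlicz_norm_le[OF this] show ?case using e r by (simp add: e_def dist_real_def)
  qed
qed

lemma delta2_fatou:
  assumes Phi: "orlicz_function \<Phi>" and D: "Delta2 \<Phi>" and P: "prob_space M" and lsc: "norm_lsc M \<Phi> \<rho>"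
  shows "fatou_property M \<Phi> \<rho>"
  unfolding fatou_property_def
proof (intro allI impI)
  fix Xs X Y
  assume "\<forall>n. Xs n \<in> orlicz_space M \<Phi>" "X \<in> orlicz_space M \<Phi>" "Y \<in> orlicz_space M \<Phi>"
    "AE \<omega> in M. (\<lambda>n. Xs n \<omega>) \<longlonglongrightarrow> X \<omega>" "\<forall>n. AE \<omega> in M. \<bar>Xs n \<omega>\<bar> \<le> Y \<omega>"
  with delta2_conv[OF Phi D P, of Xs X Y] lsc show "\<rho> X \<le> liminf (\<lambda>n. \<rho> (Xs n))"
    unfolding norm_lsc_def by blast
qed




definition heart :: "'a measure \<Rightarrow> (real \<Rightarrow> real) \<Rightarrow> ('a \<Rightarrow> real) set" where
  "heart M \<Phi> = {X. X \<in> borel_measurable M \<and> (\<forall>c>0. (\<integral>\<^sup>+ \<omega>. ennreal (\<Phi> (\<bar>X \<omega>\<bar> / c)) \<partial>M) < \<infinity>)}"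

definition rhoH :: "'a measure \<Rightarrow> (real \<Rightarrow> real) \<Rightarrow> ('a \<Rightarrow> real) \<Rightarrow> ereal" where
  "rhoH M \<Phi> X = (if X \<in> heart M \<Phi> then 0 else \<infinity>)"

lemma phi_two:
  assumes "orlicz_function \<Phi>" "0 \<le> s" "s \<le> max a b" "0 \<le> a" "0 \<le> b"
  shows "\<Phi> s \<le> \<Phi> a + \<Phi> b"
  using phi_mono[OF assms(1,2,3)] phi_max[OF assms(1,4,5)] by linarith

lemma heart_comb:
  assumes Phi: "orlicz_function \<Phi>" and X: "X \<in> heart M \<Phi>" and Y: "Y \<in> heart M \<Phi>" and t: "0 \<le> t" "t \<le> 1"
  shows "(\<lambda>\<omega>. t * X \<omega> + (1 - t) * Y \<omega>) \<in> heart M \<Phi>"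
proof -
  have Xm: "X \<in> borel_measurable M" and Ym: "Y \<in> borel_measurable M" using X Y by (auto simp: heart_def)
  have "(\<integral>\<^sup>+ \<omega>. ennreal (\<Phi> (\<bar>t * X \<omega> + (1 - t) * Y \<omega>\<bar> / c)) \<partial>M) < \<infinity>" if c: "c > 0" for c
  proof -
    have "(\<integral>\<^sup>+ \<omega>. ennreal (\<Phi> (\<bar>t * X \<omega> + (1 - t) * Y \<omega>\<bar> / c)) \<partial>M)
       \<le> (\<integral>\<^sup>+ \<omega>. ennreal (\<Phi> (\<bar>X \<omega>\<bar> / c)) + ennreal (\<Phi> (\<bar>Y \<omega>\<bar> / c)) \<partial>M)"
    proof (rule nn_integral_mono)
      fix \<omega>
      have a: "\<bar>t * X \<omega> + (1 - t) * Y \<omega>\<bar> \<le> max \<bar>X \<omega>\<bar> \<bar>Y \<omega>\<bar>"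
      proof -
        have "\<bar>t * X \<omega> + (1 - t) * Y \<omega>\<bar> \<le> \<bar>t * X \<omega>\<bar> + \<bar>(1 - t) * Y \<omega>\<bar>"
          by (rule abs_triangle_ineq)
        also have "\<dots> = t * \<bar>X \<omega>\<bar> + (1 - t) * \<bar>Y \<omega>\<bar>"
          using t by (simp add: abs_mult)
        also have "\<dots> \<le> t * max \<bar>X \<omega>\<bar> \<bar>Y \<omega>\<bar> + (1 - t) * max \<bar>X \<omega>\<bar> \<bar>Y \<omega>\<bar>"
          using t by (intro add_mono mult_left_mono) auto
        finally show ?thesis by (simp add: algebra_simps)
      qed
      have "\<bar>t * X \<omega> + (1 - t) * Y \<omega>\<bar> / c \<le> max (\<bar>X \<omega>\<bar> / c) (\<bar>Y \<omega>\<bar> / c)"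
        using divide_right_mono[OF a, of c] c by (simp add: max_divide_distrib_right)
      then have "\<Phi> (\<bar>t * X \<omega> + (1 - t) * Y \<omega>\<bar> / c) \<le> \<Phi> (\<bar>X \<omega>\<bar> / c) + \<Phi> (\<bar>Y \<omega>\<bar> / c)"
        using c by (intro phi_two[OF Phi]) auto
      then show "ennreal (\<Phi> (\<bar>t * X \<omega> + (1 - t) * Y \<omega>\<bar> / c)) \<le> ennreal (\<Phi> (\<bar>X \<omega>\<bar> / c)) + ennreal (\<Phi> (\<bar>Y \<omega>\<bar> / c))"
        using phi_nonneg[OF Phi, of "\<bar>X \<omega>\<bar> / c"] phi_nonneg[OF Phi, of "\<bar>Y \<omega>\<bar> / c"] c
        by (simp add: ennreal_plus[symmetric] del: ennreal_plus)
    qed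
    also have "\<dots> = (\<integral>\<^sup>+ \<omega>. ennreal (\<Phi> (\<bar>X \<omega>\<bar> / c)) \<partial>M) + (\<integral>\<^sup>+ \<omega>. ennreal (\<Phi> (\<bar>Y \<omega>\<bar> / c)) \<partial>M)"
      using phi_meas[OF Phi Xm c] phi_meas[OF Phi Ym c] by (intro nn_integral_add) auto
    also have "\<dots> < \<infinity>" using X Y c by (simp add: heart_def)
    finally show ?thesis .
  qed
  moreover have "(\<lambda>\<omega>. t * X \<omega> + (1 - t) * Y \<omega>) \<in> borel_measurable M" using Xm Ym by measurable
  ultimately show ?thesis by (simp add: heart_def)
qed

lemma L_diff:
  assumes Phi: "orlicz_function \<Phi>" and X: "X \<in> orlicz_space M \<Phi>" and Y: "Y \<in> orlicz_space M \<Phi>"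
  shows "(\<lambda>\<omega>. X \<omega> - Y \<omega>) \<in> orlicz_space M \<Phi>"
proof -
  obtain c1 where c1: "c1 > 0" "(\<integral>\<^sup>+ \<omega>. ennreal (\<Phi> (\<bar>X \<omega>\<bar> / c1)) \<partial>M) \<le> 1"
    and Xm: "X \<in> borel_measurable M"
    using X unfolding orlicz_space_def orlicz_set_def by auto
  obtain c2 where c2: "c2 > 0" "(\<integral>\<^sup>+ \<omega>. ennreal (\<Phi> (\<bar>Y \<omega>\<bar> / c2)) \<partial>M) \<le> 1"
    and Ym: "Y \<in> borel_measurable M"
    using Y unfolding orlicz_space_def orlicz_set_def by auto
  define m where "m = max c1 c2"
  have m: "m > 0" "c1 \<le> m" "c2 \<le> m" using c1 c2 by (auto simp: m_def)
  have pt: "\<Phi> (\<bar>X \<omega> - Y \<omega>\<bar> / (4 * m)) \<le> (1/2) * (\<Phi> (\<bar>X \<omega>\<bar> / c1) + \<Phi> (\<bar>Y \<omega>\<bar> / c2))" for \<omega>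
  proof -
    have "\<bar>X \<omega> - Y \<omega>\<bar> / (4 * m) \<le> (1/2) * max (\<bar>X \<omega>\<bar> / m) (\<bar>Y \<omega>\<bar> / m)"
      using m by (auto simp: max_def divide_simps)
    then have "\<Phi> (\<bar>X \<omega> - Y \<omega>\<bar> / (4 * m)) \<le> \<Phi> ((1/2) * max (\<bar>X \<omega>\<bar> / m) (\<bar>Y \<omega>\<bar> / m))"
      using m by (intro phi_mono[OF Phi]) (auto simp: le_max_iff_disj)
    also have "\<dots> \<le> (1/2) * \<Phi> (max (\<bar>X \<omega>\<bar> / m) (\<bar>Y \<omega>\<bar> / m))"
      using m by (intro phi_scale[OF Phi]) (auto simp: le_max_iff_disj)
    also have "\<dots> \<le> (1/2) * (\<Phi> (\<bar>X \<omega>\<bar> / m) + \<Phi> (\<bar>Y \<omega>\<bar> / m))"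
      using m by (intro mult_left_mono phi_max[OF Phi]) auto
    also have "\<dots> \<le> (1/2) * (\<Phi> (\<bar>X \<omega>\<bar> / c1) + \<Phi> (\<bar>Y \<omega>\<bar> / c2))"
      using m c1 c2 by (intro mult_left_mono add_mono phi_mono[OF Phi] divide_left_mono) auto
    finally show ?thesis .
  qed
  have "(\<integral>\<^sup>+ \<omega>. ennreal (\<Phi> (\<bar>X \<omega> - Y \<omega>\<bar> / (4 * m))) \<partial>M)
      \<le> (\<integral>\<^sup>+ \<omega>. ennreal (1/2) * (ennreal (\<Phi> (\<bar>X \<omega>\<bar> / c1)) + ennreal (\<Phi> (\<bar>Y \<omega>\<bar> / c2))) \<partial>M)"
  proof (rule nn_integral_mono)
    fix \<omega>
    show "ennreal (\<Phi> (\<bar>X \<omega> - Y \<omega>\<bar> / (4 * m))) \<le> ennreal (1/2) * (ennreal (\<Phi> (\<bar>X \<omega>\<bar> / c1)) + ennreal (\<Phi> (\<bar>Y \<omega>\<bar> / c2)))"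
    proof -
      have a: "0 \<le> \<Phi> (\<bar>X \<omega>\<bar> / c1)" "0 \<le> \<Phi> (\<bar>Y \<omega>\<bar> / c2)"
        using phi_nonneg[OF Phi, of "\<bar>X \<omega>\<bar> / c1"] phi_nonneg[OF Phi, of "\<bar>Y \<omega>\<bar> / c2"] c1 c2 by auto
      have "ennreal (\<Phi> (\<bar>X \<omega> - Y \<omega>\<bar> / (4 * m))) \<le> ennreal ((1/2) * (\<Phi> (\<bar>X \<omega>\<bar> / c1) + \<Phi> (\<bar>Y \<omega>\<bar> / c2)))"
        by (rule ennreal_leI[OF pt])
      also have "\<dots> = ennreal (1/2) * ennreal (\<Phi> (\<bar>X \<omega>\<bar> / c1) + \<Phi> (\<bar>Y \<omega>\<bar> / c2))"
        by (rule ennreal_mult) (use a in auto)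
      also have "\<dots> = ennreal (1/2) * (ennreal (\<Phi> (\<bar>X \<omega>\<bar> / c1)) + ennreal (\<Phi> (\<bar>Y \<omega>\<bar> / c2)))"
        using a by (simp add: ennreal_plus)
      finally show ?thesis .
    qed
  qed
  also have "\<dots> = ennreal (1/2) * ((\<integral>\<^sup>+ \<omega>. ennreal (\<Phi> (\<bar>X \<omega>\<bar> / c1)) \<partial>M) + (\<integral>\<^sup>+ \<omega>. ennreal (\<Phi> (\<bar>Y \<omega>\<bar> / c2)) \<partial>M))"
    using phi_meas[OF Phi Xm c1(1)] phi_meas[OF Phi Ym c2(1)]
    by (simp add: nn_integral_cmult nn_integral_add)
  also have "\<dots> \<le> ennreal (1/2) * (1 + 1)"
    using c1 c2 by (intro mult_left_mono add_mono) auto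
  also have "\<dots> = 1"
  proof -
    have "ennreal (1/2) * (1 + 1) = ennreal (1/2) * ennreal 2" by simp
    also have "\<dots> = ennreal (1/2 * 2)" by (rule ennreal_mult[symmetric]) auto
    finally show ?thesis by simp
  qed
  finally have "4 * m \<in> orlicz_set M \<Phi> (\<lambda>\<omega>. X \<omega> - Y \<omega>)" using m unfolding orlicz_set_def by auto
  then show ?thesis using Xm Ym unfolding orlicz_space_def by auto
qed




lemma zero_heart:
  assumes Phi: "orlicz_function \<Phi>"
  shows "(\<lambda>_. 0) \<in> heart M \<Phi>" "(\<lambda>_. 0) \<in> orlicz_space M \<Phi>"
proof -
  have z: "\<Phi> 0 = 0" using Phi by (simp add: orlicz_function_def)
  show "(\<lambda>_. 0) \<in> heart M \<Phi>" using z by (simp add: heart_def)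
  have "1 \<in> orlicz_set M \<Phi> (\<lambda>_. 0)" using z by (simp add: orlicz_set_def)
  then show "(\<lambda>_. 0) \<in> orlicz_space M \<Phi>" by (auto simp: orlicz_space_def)
qed

lemma rhoH_proper:
  assumes Phi: "orlicz_function \<Phi>"
  shows "proper_on (orlicz_space M \<Phi>) (rhoH M \<Phi>)"
  unfolding proper_on_def using zero_heart[OF Phi, of M] by (auto simp: rhoH_def)

lemma rhoH_convex:
  assumes Phi: "orlicz_function \<Phi>"
  shows "convex_functional (orlicz_space M \<Phi>) (rhoH M \<Phi>)"
  unfolding convex_functional_def
proof (intro ballI allI impI)
  fix X Y and t :: real
  assume XY: "X \<in> orlicz_space M \<Phi>" "Y \<in> orlicz_space M \<Phi>" and t: "0 < t \<and> t < 1"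
  show "rhoH M \<Phi> (\<lambda>\<omega>. t * X \<omega> + (1 - t) * Y \<omega>) \<le> ereal t * rhoH M \<Phi> X + ereal (1 - t) * rhoH M \<Phi> Y"
  proof (cases "X \<in> heart M \<Phi> \<and> Y \<in> heart M \<Phi>")
    case True
    then have "(\<lambda>\<omega>. t * X \<omega> + (1 - t) * Y \<omega>) \<in> heart M \<Phi>"
      using t by (intro heart_comb[OF Phi]) auto
    then show ?thesis using True by (simp add: rhoH_def)
  next
    case False
    then show ?thesis using t by (auto simp: rhoH_def)
  qed
qed

lemma rhoH_quasi:
  assumes Phi: "orlicz_function \<Phi>"
  shows "quasiconvex_functional (orlicz_space M \<Phi>) (rhoH M \<Phi>)"
  unfolding quasiconvex_functional_def
proof (intro ballI allI impI)
  fix X Y and t c :: real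
  assume XY: "X \<in> orlicz_space M \<Phi>" "Y \<in> orlicz_space M \<Phi>"
    and h: "rhoH M \<Phi> X \<le> ereal c \<and> rhoH M \<Phi> Y \<le> ereal c \<and> 0 \<le> t \<and> t \<le> 1"
  then have H: "X \<in> heart M \<Phi>" "Y \<in> heart M \<Phi>" and c: "0 \<le> c"
    by (auto simp: rhoH_def split: if_splits)
  then have "(\<lambda>\<omega>. t * X \<omega> + (1 - t) * Y \<omega>) \<in> heart M \<Phi>"
    using h by (intro heart_comb[OF Phi]) auto
  then show "rhoH M \<Phi> (\<lambda>\<omega>. t * X \<omega> + (1 - t) * Y \<omega>) \<le> ereal c" using c by (simp add: rhoH_def)
qed

lemma heart_distr:
  assumes Phi: "orlicz_function \<Phi>" and Xm: "X \<in> borel_measurable M" and c: "c > 0"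
  shows "(\<integral>\<^sup>+ \<omega>. ennreal (\<Phi> (\<bar>X \<omega>\<bar> / c)) \<partial>M) = (\<integral>\<^sup>+ x. ennreal (\<Phi> (\<bar>x\<bar> / c)) \<partial>distr M borel X)"
proof -
  have f: "(\<lambda>x. \<Phi> (\<bar>x\<bar> / c)) \<in> borel_measurable borel"
    by (rule phi_meas[OF Phi _ c]) simp
  have "(\<lambda>x. ennreal (\<Phi> (\<bar>x\<bar> / c))) \<in> borel_measurable (distr M borel X)"
    using f by (simp add: measurable_cong_sets[OF sets_distr refl])
  then show ?thesis using Xm by (simp add: nn_integral_distr)
qed

lemma rhoH_law:
  assumes Phi: "orlicz_function \<Phi>"
  shows "law_invariant M (orlicz_space M \<Phi>) (rhoH M \<Phi>)"
  unfolding law_invariant_def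
proof (intro ballI impI)
  fix X Y assume XY: "X \<in> orlicz_space M \<Phi>" "Y \<in> orlicz_space M \<Phi>" and d: "distr M borel X = distr M borel Y"
  have Xm: "X \<in> borel_measurable M" and Ym: "Y \<in> borel_measurable M" using XY by (auto simp: orlicz_space_def)
  have "X \<in> heart M \<Phi> \<longleftrightarrow> Y \<in> heart M \<Phi>"
    unfolding heart_def using Xm Ym heart_distr[OF Phi Xm] heart_distr[OF Phi Ym] d by auto
  then show "rhoH M \<Phi> X = rhoH M \<Phi> Y" by (simp add: rhoH_def)
qed

lemma rhoH_nonneg: "rhoH M \<Phi> X \<ge> 0"
  by (simp add: rhoH_def)

lemma rhoH_lsc:
  assumes Phi: "orlicz_function \<Phi>"
  shows "norm_lsc M \<Phi> (rhoH M \<Phi>)"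
  unfolding norm_lsc_def
proof (intro allI impI)
  fix Xs X
  assume Xs: "\<forall>n. Xs n \<in> orlicz_space M \<Phi>" and X: "X \<in> orlicz_space M \<Phi>"
    and lim: "(\<lambda>n. orlicz_norm M \<Phi> (\<lambda>\<omega>. Xs n \<omega> - X \<omega>)) \<longlonglongrightarrow> 0"
  show "rhoH M \<Phi> X \<le> liminf (\<lambda>n. rhoH M \<Phi> (Xs n))"
  proof (cases "X \<in> heart M \<Phi>")
    case True
    then show ?thesis
    proof -
      have "0 \<le> liminf (\<lambda>n. rhoH M \<Phi> (Xs n))"
        by (rule Liminf_bounded) (simp add: rhoH_nonneg)
      then show ?thesis using True by (simp add: rhoH_def)
    qed
  next
    case False
    have Xm: "X \<in> borel_measurable M" using X by (simp add: orlicz_space_def)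
    then obtain c where c: "c > 0" and inf: "\<not> (\<integral>\<^sup>+ \<omega>. ennreal (\<Phi> (\<bar>X \<omega>\<bar> / c)) \<partial>M) < \<infinity>"
      using False by (auto simp: heart_def)
    have ev: "eventually (\<lambda>n. orlicz_norm M \<Phi> (\<lambda>\<omega>. Xs n \<omega> - X \<omega>) < c / 2) sequentially"
      using order_tendstoD(2)[OF lim, of "c / 2"] c by simp
    have "eventually (\<lambda>n. Xs n \<notin> heart M \<Phi>) sequentially"
      using ev
    proof eventually_elim
      case (elim n)
      show ?case
      proof
        assume H: "Xs n \<in> heart M \<Phi>"
        define Z where "Z = (\<lambda>\<omega>. Xs n \<omega> - X \<omega>)"
        have ZL: "Z \<in> orlicz_space M \<Phi>" unfolding Z_def using L_diff[OF Phi] Xs X by auto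
        then have ne: "orlicz_set M \<Phi> Z \<noteq> {}" and Zm: "Z \<in> borel_measurable M"
          by (auto simp: orlicz_space_def)
        obtain d where d: "d \<in> orlicz_set M \<Phi> Z" "d < c / 2"
          using cInf_lessD[OF ne] elim unfolding orlicz_norm_def Z_def by blast
        have d0: "d > 0" and dI: "(\<integral>\<^sup>+ \<omega>. ennreal (\<Phi> (\<bar>Z \<omega>\<bar> / d)) \<partial>M) \<le> 1"
          using d by (auto simp: orlicz_set_def)
        have Xsm: "Xs n \<in> borel_measurable M" using H by (simp add: heart_def)
        have c2: "c / 2 > 0" using c by simp
        have fin: "(\<integral>\<^sup>+ \<omega>. ennreal (\<Phi> (\<bar>Xs n \<omega>\<bar> / (c / 2))) \<partial>M) < \<infinity>"
          using H c2 unfolding heart_def by blast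
        have "(\<integral>\<^sup>+ \<omega>. ennreal (\<Phi> (\<bar>X \<omega>\<bar> / c)) \<partial>M)
            \<le> (\<integral>\<^sup>+ \<omega>. ennreal (\<Phi> (\<bar>Xs n \<omega>\<bar> / (c / 2))) + ennreal (\<Phi> (\<bar>Z \<omega>\<bar> / d)) \<partial>M)"
        proof (rule nn_integral_mono)
          fix \<omega>
          have "\<bar>X \<omega>\<bar> \<le> \<bar>Xs n \<omega>\<bar> + \<bar>Z \<omega>\<bar>" unfolding Z_def by linarith
          then have "\<bar>X \<omega>\<bar> / c \<le> max (\<bar>Xs n \<omega>\<bar> / (c / 2)) (\<bar>Z \<omega>\<bar> / (c / 2))"
            using c by (auto simp: divide_simps max_def)
          also have "\<dots> \<le> max (\<bar>Xs n \<omega>\<bar> / (c / 2)) (\<bar>Z \<omega>\<bar> / d)"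
            using d d0 by (intro max.mono divide_left_mono) auto
          finally have "\<Phi> (\<bar>X \<omega>\<bar> / c) \<le> \<Phi> (\<bar>Xs n \<omega>\<bar> / (c / 2)) + \<Phi> (\<bar>Z \<omega>\<bar> / d)"
            using c d0 by (intro phi_two[OF Phi]) auto
          then show "ennreal (\<Phi> (\<bar>X \<omega>\<bar> / c)) \<le> ennreal (\<Phi> (\<bar>Xs n \<omega>\<bar> / (c / 2))) + ennreal (\<Phi> (\<bar>Z \<omega>\<bar> / d))"
            using phi_nonneg[OF Phi, of "\<bar>Xs n \<omega>\<bar> / (c / 2)"] phi_nonneg[OF Phi, of "\<bar>Z \<omega>\<bar> / d"] c d0
            by (simp add: ennreal_plus[symmetric] del: ennreal_plus)
        qed
        also have "\<dots> = (\<integral>\<^sup>+ \<omega>. ennreal (\<Phi> (\<bar>Xs n \<omega>\<bar> / (c / 2))) \<partial>M) + (\<integral>\<^sup>+ \<omega>. ennreal (\<Phi> (\<bar>Z \<omega>\<bar> / d)) \<partial>M)"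
          using phi_meas[OF Phi Xsm c2] phi_meas[OF Phi Zm d0] by (intro nn_integral_add) auto
        also have "\<dots> < \<infinity>"
          using fin dI by (simp add: ennreal_add_less_top) (meson ennreal_one_less_top le_less_trans)
        finally show False using inf by simp
      qed
    qed
    then have "eventually (\<lambda>n. rhoH M \<Phi> (Xs n) = \<infinity>) sequentially"
      by eventually_elim (simp add: rhoH_def)
    then have "\<infinity> \<le> liminf (\<lambda>n. rhoH M \<Phi> (Xs n))"
      unfolding le_Liminf_iff by (auto elim: eventually_mono)
    then show ?thesis by simp
  qed
qed

lemma rhoH_not_fatou:
  assumes Phi: "orlicz_function \<Phi>" and P: "prob_space M"
    and X: "X \<in> orlicz_space M \<Phi>" and nX: "X \<notin> heart M \<Phi>"
  shows "\<not> fatou_property M \<Phi> (rhoH M \<Phi>)"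
proof
  interpret prob_space M by fact
  assume F: "fatou_property M \<Phi> (rhoH M \<Phi>)"
  have Xm: "X \<in> borel_measurable M" and ne: "orlicz_set M \<Phi> X \<noteq> {}" using X by (auto simp: orlicz_space_def)
  define Xs where "Xs n = (\<lambda>\<omega>. if \<bar>X \<omega>\<bar> \<le> real n then X \<omega> else 0)" for n :: nat
  define Y where "Y = (\<lambda>\<omega>. \<bar>X \<omega>\<bar>)"
  have Xsm: "Xs n \<in> borel_measurable M" for n unfolding Xs_def using Xm by measurable
  have Xsb: "\<bar>Xs n \<omega>\<bar> \<le> \<bar>X \<omega>\<bar>" for n \<omega> by (simp add: Xs_def)
  have YL: "Y \<in> orlicz_space M \<Phi>"
    using X Xm unfolding orlicz_space_def orlicz_set_def Y_def by auto
  have sub: "orlicz_set M \<Phi> X \<subseteq> orlicz_set M \<Phi> (Xs n)" for n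
  proof
    fix c assume "c \<in> orlicz_set M \<Phi> X"
    then have c: "c > 0" "(\<integral>\<^sup>+ \<omega>. ennreal (\<Phi> (\<bar>X \<omega>\<bar> / c)) \<partial>M) \<le> 1" by (auto simp: orlicz_set_def)
    have "(\<integral>\<^sup>+ \<omega>. ennreal (\<Phi> (\<bar>Xs n \<omega>\<bar> / c)) \<partial>M) \<le> (\<integral>\<^sup>+ \<omega>. ennreal (\<Phi> (\<bar>X \<omega>\<bar> / c)) \<partial>M)"
      using c Xsb by (intro nn_integral_mono ennreal_leI phi_mono[OF Phi] divide_right_mono) auto
    then show "c \<in> orlicz_set M \<Phi> (Xs n)" using c by (auto simp: orlicz_set_def)
  qed
  have XsL: "Xs n \<in> orlicz_space M \<Phi>" for n
    using sub[of n] ne Xsm by (auto simp: orlicz_space_def)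
  have XsH: "Xs n \<in> heart M \<Phi>" for n
  proof -
    have "(\<integral>\<^sup>+ \<omega>. ennreal (\<Phi> (\<bar>Xs n \<omega>\<bar> / c)) \<partial>M) < \<infinity>" if c: "c > 0" for c
    proof -
      have "(\<integral>\<^sup>+ \<omega>. ennreal (\<Phi> (\<bar>Xs n \<omega>\<bar> / c)) \<partial>M) \<le> (\<integral>\<^sup>+ \<omega>. ennreal (\<Phi> (real n / c)) \<partial>M)"
        using c by (intro nn_integral_mono ennreal_leI phi_mono[OF Phi] divide_right_mono) (auto simp: Xs_def)
      also have "\<dots> = ennreal (\<Phi> (real n / c))" by (simp add: emeasure_space_1)
      also have "\<dots> < \<infinity>" by simp
      finally show ?thesis .
    qed
    then show ?thesis using Xsm by (simp add: heart_def)
  qed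
  have lim: "AE \<omega> in M. (\<lambda>n. Xs n \<omega>) \<longlonglongrightarrow> X \<omega>"
  proof (rule AE_I2)
    fix \<omega>
    obtain N :: nat where "\<bar>X \<omega>\<bar> \<le> real N" using real_arch_simple by blast
    then have "eventually (\<lambda>n. Xs n \<omega> = X \<omega>) sequentially"
      unfolding eventually_sequentially Xs_def by (intro exI[of _ N]) auto
    then show "(\<lambda>n. Xs n \<omega>) \<longlonglongrightarrow> X \<omega>" by (rule tendsto_eventually)
  qed
  have bnd: "\<forall>n. AE \<omega> in M. \<bar>Xs n \<omega>\<bar> \<le> Y \<omega>" using Xsb by (simp add: Y_def)
  have "rhoH M \<Phi> X \<le> liminf (\<lambda>n. rhoH M \<Phi> (Xs n))"
    using F XsL X YL lim bnd unfolding fatou_property_def by blast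
  moreover have "(\<lambda>n. rhoH M \<Phi> (Xs n)) = (\<lambda>n. 0)" using XsH by (simp add: rhoH_def)
  ultimately show False using nX by (simp add: rhoH_def Liminf_const)
qed




context prob_space
begin

lemma small_sets_pow:
  assumes na: "nonatomic M" and A: "A \<in> sets M" "measure M A > 0"
  shows "\<exists>B\<in>sets M. B \<subseteq> A \<and> 0 < measure M B \<and> measure M B \<le> measure M A / 2 ^ n"
proof (induction n)
  case 0 then show ?case using A by auto
next
  case (Suc n)
  then obtain B where B: "B \<in> sets M" "B \<subseteq> A" "0 < measure M B" "measure M B \<le> measure M A / 2 ^ n" by blast
  obtain C where C: "C \<in> sets M" "C \<subseteq> B" "0 < measure M C" "measure M C < measure M B"
    using na B(1,3) unfolding nonatomic_def by blast
  show ?case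
  proof (cases "measure M C \<le> measure M B / 2")
    case True
    then show ?thesis using B C by (intro bexI[of _ C]) auto
  next
    case False
    have d: "measure M (B - C) = measure M B - measure M C" using B C by (intro finite_measure_Diff) auto
    show ?thesis using B C False d by (intro bexI[of _ "B - C"]) auto
  qed
qed

lemma small_sets:
  assumes na: "nonatomic M" and A: "A \<in> sets M" "measure M A > 0" and e: "e > 0"
  shows "\<exists>B\<in>sets M. B \<subseteq> A \<and> 0 < measure M B \<and> measure M B \<le> e"
proof -
  obtain n where n: "1 / e < 2 ^ n" using real_arch_pow[of 2 "1/e"] by auto
  have "measure M A / 2 ^ n \<le> 1 / 2 ^ n" by (intro divide_right_mono) (auto simp: prob_le_1)
  also have "\<dots> \<le> e" using n e by (simp add: field_simps)
  finally have le: "measure M A / 2 ^ n \<le> e" .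
  obtain B where "B \<in> sets M" "B \<subseteq> A" "0 < measure M B" "measure M B \<le> measure M A / 2 ^ n"
    using small_sets_pow[OF na A, of n] by blast
  then show ?thesis using le by (intro bexI[of _ B]) auto
qed

lemma exact_measure:
  assumes na: "nonatomic M" and A: "A \<in> sets M" and q: "0 \<le> q" "q \<le> measure M A"
  shows "\<exists>B\<in>sets M. B \<subseteq> A \<and> measure M B = q"
proof -
  define cand where "cand S = {measure M C | C. C \<in> sets M \<and> C \<subseteq> A - S \<and> measure M S + measure M C \<le> q}" for S
  define good where "good S C \<longleftrightarrow> C \<in> sets M \<and> C \<subseteq> A - S \<and> measure M S + measure M C \<le> q \<and> Sup (cand S) / 2 \<le> measure M C" for S C
  define inv where "inv S \<longleftrightarrow> S \<in> sets M \<and> S \<subseteq> A \<and> measure M S \<le> q" for S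
  have ex: "\<exists>C. good S C" if "inv S" for S
  proof -
    have ne: "cand S \<noteq> {}" using that unfolding cand_def inv_def by (auto intro!: exI[of _ "{}"])
    have bdd: "bdd_above (cand S)" unfolding cand_def by (rule bdd_aboveI[of _ q]) (use measure_nonneg[of M S] in \<open>auto simp del: measure_nonneg\<close>)
    show ?thesis
    proof (cases "Sup (cand S) \<le> 0")
      case True
      then show ?thesis using that unfolding good_def inv_def by (intro exI[of _ "{}"]) auto
    next
      case False
      then have "Sup (cand S) / 2 < Sup (cand S)" by simp
      then obtain x where "x \<in> cand S" "Sup (cand S) / 2 < x" using less_cSup_iff[OF ne bdd] by blast
      then obtain C where "x = measure M C" "C \<in> sets M" "C \<subseteq> A - S" "measure M S + measure M C \<le> q"
        "Sup (cand S) / 2 < x" unfolding cand_def by blast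
      then have "good S C" unfolding good_def by simp
      then show ?thesis by blast
    qed
  qed
  define Cs where "Cs S = (SOME C. good S C)" for S
  have Cs: "good S (Cs S)" if "inv S" for S unfolding Cs_def using someI_ex[OF ex[OF that]] .
  define B where "B k = ((\<lambda>S. S \<union> Cs S) ^^ k) {}" for k
  have B0: "B 0 = {}" and BS: "B (Suc k) = B k \<union> Cs (B k)" for k by (simp_all add: B_def)
  have invB: "inv (B k)" for k
  proof (induction k)
    case 0 then show ?case using q by (simp add: B0 inv_def)
  next
    case (Suc k)
    have g: "good (B k) (Cs (B k))" using Cs[OF Suc] .
    have "measure M (B (Suc k)) = measure M (B k) + measure M (Cs (B k))"
      unfolding BS using g Suc by (intro finite_measure_Union) (auto simp: good_def inv_def)
    moreover have "B (Suc k) \<in> sets M" unfolding BS using g Suc by (intro sets.Un) (auto simp: good_def inv_def)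
    moreover have "B (Suc k) \<subseteq> A" unfolding BS using g Suc by (auto simp: good_def inv_def)
    moreover have "measure M (B k) + measure M (Cs (B k)) \<le> q" using g by (simp add: good_def)
    ultimately show ?case unfolding inv_def by simp
  qed
  have gB: "good (B k) (Cs (B k))" for k using Cs[OF invB] .
  have mS: "measure M (B (Suc k)) = measure M (B k) + measure M (Cs (B k))" for k
    unfolding BS using gB[of k] invB[of k] by (intro finite_measure_Union) (auto simp: good_def inv_def)
  have inc: "incseq B" by (rule incseq_SucI) (simp add: BS)
  define U where "U = (\<Union>k. B k)"
  have Bs: "range B \<subseteq> sets M" using invB by (auto simp: inv_def)
  have U: "U \<in> sets M" "U \<subseteq> A" using invB by (auto simp: U_def inv_def)
  have limB: "(\<lambda>k. measure M (B k)) \<longlonglongrightarrow> measure M U"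
    unfolding U_def by (rule finite_Lim_measure_incseq[OF Bs inc])
  have UQ: "measure M U \<le> q"
    by (rule LIMSEQ_le_const2[OF limB]) (use invB in \<open>auto simp: inv_def\<close>)
  have BU: "measure M (B k) \<le> measure M U" for k
    using U by (intro finite_measure_mono) (auto simp: U_def)
  have "(\<lambda>k. measure M (B (Suc k)) - measure M (B k)) \<longlonglongrightarrow> measure M U - measure M U"
    by (intro tendsto_diff limB LIMSEQ_Suc)
  then have limC: "(\<lambda>k. measure M (Cs (B k))) \<longlonglongrightarrow> 0" using mS by simp
  have "measure M U = q"
  proof (rule ccontr)
    assume "measure M U \<noteq> q"
    then have lt: "measure M U < q" using UQ by simp
    have AU: "measure M (A - U) = measure M A - measure M U" using U A by (intro finite_measure_Diff) auto
    then have "measure M (A - U) > 0" using lt q by simp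
    moreover have AUs: "A - U \<in> sets M" using A U(1) by (rule sets.Diff)
    moreover have "q - measure M U > 0" using lt by simp
    ultimately have "\<exists>D\<in>sets M. D \<subseteq> A - U \<and> 0 < measure M D \<and> measure M D \<le> q - measure M U"
      by (intro small_sets[OF na])
    then obtain D where D: "D \<in> sets M" "D \<subseteq> A - U" "0 < measure M D" "measure M D \<le> q - measure M U"
      by blast
    have "measure M D / 2 \<le> measure M (Cs (B k))" for k
    proof -
      have "B k \<subseteq> U" unfolding U_def by blast
      then have "D \<subseteq> A - B k" using D(2) by blast
      moreover have "measure M (B k) + measure M D \<le> q" using D(4) BU[of k] by linarith
      ultimately have "measure M D \<in> cand (B k)"
        unfolding cand_def using D(1) by blast
      moreover have "bdd_above (cand (B k))" unfolding cand_def by (rule bdd_aboveI[of _ q]) (use measure_nonneg[of M "B k"] in \<open>auto simp del: measure_nonneg\<close>)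
      ultimately have "measure M D \<le> Sup (cand (B k))" by (rule cSup_upper)
      then show ?thesis using gB[of k] by (simp add: good_def)
    qed
    then have "measure M D / 2 \<le> 0" by (intro LIMSEQ_le_const[OF limC]) simp
    then show False using D by simp
  qed
  then show ?thesis using U by blast
qed

end




context prob_space
begin

lemma disjoint_sets_measures:
  assumes na: "nonatomic M" and r: "\<And>n. 0 \<le> r n" "summable r" "suminf r \<le> 1"
  shows "\<exists>A. (\<forall>n. A n \<in> sets M) \<and> disjoint_family A \<and> (\<forall>n. measure M (A n) = r n)"
proof -
  define pick where "pick n S = (SOME C. C \<in> sets M \<and> C \<subseteq> space M - S \<and> measure M C = r n)" for n S
  define D where "D = rec_nat {} (\<lambda>n S. S \<union> pick n S)"
  have D0: "D 0 = {}" and DS: "D (Suc n) = D n \<union> pick n (D n)" for n by (simp_all add: D_def)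
  have inv: "D n \<in> sets M \<and> measure M (D n) = (\<Sum>k<n. r k) \<and>
      pick n (D n) \<in> sets M \<and> pick n (D n) \<subseteq> space M - D n \<and> measure M (pick n (D n)) = r n" for n
  proof (induction n)
    case 0
    have "\<exists>C\<in>sets M. C \<subseteq> space M - {} \<and> measure M C = r 0"
      using exact_measure[OF na sets.top, of "r 0"] r sum_le_suminf[OF r(2), of "{0}"]
      by (auto simp: prob_space)
    then have "pick 0 {} \<in> sets M \<and> pick 0 {} \<subseteq> space M - {} \<and> measure M (pick 0 {}) = r 0"
      unfolding pick_def by (rule someI2_bex) auto
    then show ?case by (simp add: D0)
  next
    case (Suc n)
    have DSm: "D (Suc n) \<in> sets M" unfolding DS using Suc by (intro sets.Un) auto
    have mD: "measure M (D (Suc n)) = (\<Sum>k<Suc n. r k)"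
    proof -
      have "measure M (D (Suc n)) = measure M (D n) + measure M (pick n (D n))"
        unfolding DS using Suc by (intro finite_measure_Union) auto
      then show ?thesis using Suc by simp
    qed
    have sub: "D (Suc n) \<subseteq> space M" using DSm sets.sets_into_space by blast
    have "measure M (space M - D (Suc n)) = 1 - (\<Sum>k<Suc n. r k)"
      using DSm mD prob_compl[of "D (Suc n)"] by simp
    moreover have "(\<Sum>k<Suc (Suc n). r k) \<le> 1"
      using sum_le_suminf[OF r(2), of "{..<Suc (Suc n)}"] r by auto
    ultimately have "r (Suc n) \<le> measure M (space M - D (Suc n))" by simp
    then have "\<exists>C\<in>sets M. C \<subseteq> space M - D (Suc n) \<and> measure M C = r (Suc n)"
      using exact_measure[OF na, of "space M - D (Suc n)" "r (Suc n)"] DSm r by auto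
    then have "pick (Suc n) (D (Suc n)) \<in> sets M \<and> pick (Suc n) (D (Suc n)) \<subseteq> space M - D (Suc n)
        \<and> measure M (pick (Suc n) (D (Suc n))) = r (Suc n)"
      unfolding pick_def by (rule someI2_bex) auto
    then show ?case using DSm mD by simp
  qed
  define A where "A n = pick n (D n)" for n
  have mono: "D m \<subseteq> D n" if "m \<le> n" for m n
    using that by (induction n) (auto simp: DS le_Suc_eq)
  have "disjoint_family A"
    unfolding disjoint_family_on_def
  proof (intro ballI impI)
    fix m n :: nat assume "m \<noteq> n"
    then consider "m < n" | "n < m" by linarith
    then show "A m \<inter> A n = {}"
    proof cases
      case 1
      then have "A m \<subseteq> D n" using mono[of "Suc m" n] by (auto simp: A_def DS)
      then show ?thesis using inv[of n] by (auto simp: A_def)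
    next
      case 2
      then have "A n \<subseteq> D m" using mono[of "Suc n" m] by (auto simp: A_def DS)
      then show ?thesis using inv[of m] by (auto simp: A_def)
    qed
  qed
  then show ?thesis using inv by (intro exI[of _ A]) (auto simp: A_def)
qed

end




lemma not_delta2_exists:
  assumes Phi: "orlicz_function \<Phi>" and P: "prob_space M" and na: "nonatomic M" and nD: "\<not> Delta2 \<Phi>"
  shows "\<exists>X\<in>orlicz_space M \<Phi>. X \<notin> heart M \<Phi>"
proof -
  interpret prob_space M by fact
  obtain T where T: "T \<ge> 1" "\<And>t. t \<ge> T \<Longrightarrow> \<Phi> t \<ge> 1" using phi_large[OF Phi] by blast
  have nd: "\<exists>t\<ge>T. k * \<Phi> t \<le> \<Phi> (2 * t)" for k
  proof (rule ccontr)
    assume "\<not> (\<exists>t\<ge>T. k * \<Phi> t \<le> \<Phi> (2 * t))"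
    then have "\<forall>t\<ge>T. \<Phi> (2 * t) < k * \<Phi> t" using not_le by blast
    moreover have "T > 0" using T(1) by simp
    ultimately have "Delta2 \<Phi>" unfolding Delta2_def by blast
    then show False using nD by simp
  qed
  define t where "t n = (SOME t. t \<ge> T \<and> 2 ^ Suc n * \<Phi> t \<le> \<Phi> (2 * t))" for n :: nat
  have tn: "t n \<ge> T \<and> 2 ^ Suc n * \<Phi> (t n) \<le> \<Phi> (2 * t n)" for n
    unfolding t_def using someI_ex[OF nd[of "2 ^ Suc n"]] by simp
  have tpos: "t n > 0" and Pt: "\<Phi> (t n) \<ge> 1" for n using tn[of n] T by auto
  define r where "r n = 1 / (2 ^ Suc n * \<Phi> (t n))" for n
  define g where "g n = (1/2::real) ^ Suc n" for n
  have g: "g sums 1" unfolding g_def by (rule power_half_series)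
  have r0: "0 \<le> r n" for n using Pt[of n] by (simp add: r_def)
  have rg: "r n \<le> g n" for n
  proof -
    have "(1::real) \<le> 2 ^ Suc n" by (rule one_le_power) simp
    from mult_mono[OF this Pt[of n]] have "1 \<le> 2 ^ Suc n * \<Phi> (t n)" by simp
    then have "1 / (2 ^ Suc n * \<Phi> (t n)) \<le> 1 / 2 ^ Suc n"
      using Pt[of n] by (intro divide_left_mono) auto
    then show ?thesis by (simp add: r_def g_def power_divide)
  qed
  have rs: "summable r"
    by (rule summable_comparison_test'[OF sums_summable[OF g], of 0]) (use r0 rg in auto)
  have r1: "suminf r \<le> 1"
    using suminf_le[OF rg rs sums_summable[OF g]] sums_unique[OF g] by simp
  obtain A where A: "\<And>n. A n \<in> sets M" "disjoint_family A" "\<And>n. measure M (A n) = r n"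
    using disjoint_sets_measures[OF na r0 rs r1] by blast
  note Ameas[measurable] = A(1)
  define X where "X \<omega> = (\<Sum>n. t n * indicator (A n) \<omega>)" for \<omega>
  have cases: "(\<exists>m. \<omega> \<in> A m \<and> (\<forall>n. n \<noteq> m \<longrightarrow> \<omega> \<notin> A n)) \<or> (\<forall>n. \<omega> \<notin> A n)" for \<omega>
    using A(2) unfolding disjoint_family_on_def by blast
  have pw: "(\<lambda>n. t n * indicator (A n) \<omega>) sums X \<omega> \<and>
      ennreal (h (X \<omega>)) = (\<Sum>n. ennreal (h (t n)) * indicator (A n) \<omega>)" if h0: "h 0 = 0" for \<omega> and h :: "real \<Rightarrow> real"
  proof (cases "\<exists>m. \<omega> \<in> A m \<and> (\<forall>n. n \<noteq> m \<longrightarrow> \<omega> \<notin> A n)")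
    case True
    then obtain m where m: "\<omega> \<in> A m" "\<And>n. n \<noteq> m \<Longrightarrow> \<omega> \<notin> A n" by blast
    have e1: "(\<lambda>n. t n * indicator (A n) \<omega>) = (\<lambda>n. if n = m then t n else 0)"
      using m by (auto simp: indicator_def)
    have s: "(\<lambda>n. t n * indicator (A n) \<omega>) sums t m" unfolding e1 by (rule sums_single)
    then have Xe: "X \<omega> = t m" unfolding X_def by (simp add: sums_unique[symmetric])
    have "(\<Sum>n. ennreal (h (t n)) * indicator (A n) \<omega>) = (\<Sum>n\<in>{m}. ennreal (h (t n)) * indicator (A n) \<omega>)"
      by (rule suminf_finite) (use m in auto)
    then show ?thesis using s Xe m by (simp add: X_def)
  next
    case False
    then have n: "\<And>n. \<omega> \<notin> A n" using cases by blast
    then have X0: "X \<omega> = 0" by (simp add: X_def)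
    show ?thesis using n X0 h0 by simp
  qed
  have Xm: "X \<in> borel_measurable M"
  proof (rule borel_measurable_LIMSEQ_real)
    fix \<omega>
    show "(\<lambda>i. \<Sum>n<i. t n * indicator (A n) \<omega>) \<longlonglongrightarrow> X \<omega>"
      using pw[of "\<lambda>x. x" \<omega>] by (simp add: sums_def)
  next
    fix i show "(\<lambda>\<omega>. \<Sum>n<i. t n * indicator (A n) \<omega>) \<in> borel_measurable M" using A(1) by measurable
  qed
  have integ: "(\<integral>\<^sup>+ \<omega>. ennreal (\<Phi> (\<bar>X \<omega>\<bar> / c)) \<partial>M) = (\<Sum>n. ennreal (\<Phi> (t n / c) * r n))"
    if c: "c > 0" for c
  proof -
    have h0: "\<Phi> (\<bar>0\<bar> / c) = 0" using Phi by (simp add: orlicz_function_def)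
    have "(\<integral>\<^sup>+ \<omega>. ennreal (\<Phi> (\<bar>X \<omega>\<bar> / c)) \<partial>M)
        = (\<integral>\<^sup>+ \<omega>. (\<Sum>n. ennreal (\<Phi> (\<bar>t n\<bar> / c)) * indicator (A n) \<omega>) \<partial>M)"
      using pw[of "\<lambda>x. \<Phi> (\<bar>x\<bar> / c)", OF h0] by simp
    also have "\<dots> = (\<Sum>n. \<integral>\<^sup>+ \<omega>. ennreal (\<Phi> (\<bar>t n\<bar> / c)) * indicator (A n) \<omega> \<partial>M)"
      by (intro nn_integral_suminf) measurable
    also have "\<dots> = (\<Sum>n. ennreal (\<Phi> (t n / c) * r n))"
    proof (rule suminf_cong)
      fix n
      have "(\<integral>\<^sup>+ \<omega>. ennreal (\<Phi> (\<bar>t n\<bar> / c)) * indicator (A n) \<omega> \<partial>M) = ennreal (\<Phi> (t n / c)) * emeasure M (A n)"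
        using A(1) tpos[of n] by (simp add: nn_integral_cmult_indicator)
      also have "\<dots> = ennreal (\<Phi> (t n / c) * r n)"
        using A(3)[of n] r0[of n] phi_nonneg[OF Phi, of "t n / c"] tpos[of n] c
        by (simp add: emeasure_eq_measure ennreal_mult)
      finally show "(\<integral>\<^sup>+ \<omega>. ennreal (\<Phi> (\<bar>t n\<bar> / c)) * indicator (A n) \<omega> \<partial>M) = ennreal (\<Phi> (t n / c) * r n)" .
    qed
    finally show ?thesis .
  qed
  have gn: "\<Phi> (t n / 1) * r n = g n" for n
  proof -
    have "\<Phi> (t n) > 0" using Pt[of n] by simp
    then show ?thesis by (simp add: r_def g_def power_divide)
  qed
  have "(\<integral>\<^sup>+ \<omega>. ennreal (\<Phi> (\<bar>X \<omega>\<bar> / 1)) \<partial>M) = (\<Sum>n. ennreal (\<Phi> (t n / 1) * r n))"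
    by (rule integ) (rule zero_less_one)
  also have "\<dots> = (\<Sum>n. ennreal (g n))" by (rule suminf_cong) (simp only: gn)
  also have "\<dots> = ennreal (\<Sum>n. g n)"
    by (rule suminf_ennreal2) (auto simp: g_def intro: sums_summable[OF g])
  also have "\<dots> = ennreal 1" using sums_unique[OF g] by simp
  finally have i1: "(\<integral>\<^sup>+ \<omega>. ennreal (\<Phi> (\<bar>X \<omega>\<bar> / 1)) \<partial>M) = 1" by simp
  have "1 \<in> orlicz_set M \<Phi> X" unfolding orlicz_set_def using i1 by simp
  then have XL: "X \<in> orlicz_space M \<Phi>" using Xm by (auto simp: orlicz_space_def)
  have "(\<integral>\<^sup>+ \<omega>. ennreal (\<Phi> (\<bar>X \<omega>\<bar> / (1/2))) \<partial>M) = \<top>"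
  proof -
    have ge: "1 \<le> \<Phi> (t n / (1/2)) * r n" for n
    proof -
      have a: "t n / (1/2) = 2 * t n" by simp
      have b: "0 < 2 ^ Suc n * \<Phi> (t n)" using Pt[of n] by simp
      have "\<Phi> (t n / (1/2)) * r n = \<Phi> (2 * t n) / (2 ^ Suc n * \<Phi> (t n))" unfolding a r_def by simp
      also have "\<dots> \<ge> 1" using b tn[of n] by (simp add: le_divide_eq)
      finally show ?thesis .
    qed
    have ns: "\<not> summable (\<lambda>n. \<Phi> (t n / (1/2)) * r n)"
    proof
      assume "summable (\<lambda>n. \<Phi> (t n / (1/2)) * r n)"
      then have "(\<lambda>n. \<Phi> (t n / (1/2)) * r n) \<longlonglongrightarrow> 0" by (rule summable_LIMSEQ_zero)
      then have "1 \<le> (0::real)" by (rule LIMSEQ_le_const) (use ge in blast)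
      then show False by simp
    qed
    have nn: "\<And>n. 0 \<le> \<Phi> (t n / (1/2)) * r n" using ge by (meson order_trans zero_le_one)
    have "(\<Sum>n. ennreal (\<Phi> (t n / (1/2)) * r n)) = \<top>" by (rule summable_iff_suminf_neq_top[OF nn ns])
    moreover have "(\<integral>\<^sup>+ \<omega>. ennreal (\<Phi> (\<bar>X \<omega>\<bar> / (1/2))) \<partial>M) = (\<Sum>n. ennreal (\<Phi> (t n / (1/2)) * r n))"
      by (rule integ) simp
    ultimately show ?thesis by simp
  qed
  then have "X \<notin> heart M \<Phi>"
  proof -
    assume eq: "(\<integral>\<^sup>+ \<omega>. ennreal (\<Phi> (\<bar>X \<omega>\<bar> / (1/2))) \<partial>M) = \<top>"
    show ?thesis
    proof
      assume "X \<in> heart M \<Phi>"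
      then have hh: "\<forall>c>0. (\<integral>\<^sup>+ \<omega>. ennreal (\<Phi> (\<bar>X \<omega>\<bar> / c)) \<partial>M) < \<infinity>" by (simp add: heart_def)
      have "(\<integral>\<^sup>+ \<omega>. ennreal (\<Phi> (\<bar>X \<omega>\<bar> / (1/2))) \<partial>M) < \<infinity>" using hh[rule_format, of "1/2"] by simp
      then show False using eq by simp
    qed
  qed
  then show ?thesis using XL by blast
qed

theorem theorem2:
  fixes M :: "'a measure" and \<Phi> :: "real \<Rightarrow> real"
  assumes "prob_space M" and "nonatomic M" and "orlicz_function \<Phi>"
  shows "((\<forall>\<rho>. proper_on (orlicz_space M \<Phi>) \<rho> \<and> convex_functional (orlicz_space M \<Phi>) \<rho>
              \<and> law_invariant M (orlicz_space M \<Phi>) \<rho> \<and> norm_lsc M \<Phi> \<rho> \<longrightarrow> fatou_property M \<Phi> \<rho>)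
           \<longleftrightarrow> Delta2 \<Phi>)
       \<and> ((\<forall>\<rho>. proper_on (orlicz_space M \<Phi>) \<rho> \<and> quasiconvex_functional (orlicz_space M \<Phi>) \<rho>
              \<and> law_invariant M (orlicz_space M \<Phi>) \<rho> \<and> norm_lsc M \<Phi> \<rho> \<longrightarrow> fatou_property M \<Phi> \<rho>)
           \<longleftrightarrow> Delta2 \<Phi>)"
proof -
  have D: "\<And>\<rho>. Delta2 \<Phi> \<Longrightarrow> norm_lsc M \<Phi> \<rho> \<Longrightarrow> fatou_property M \<Phi> \<rho>"
    using delta2_fatou[OF assms(3) _ assms(1)] by blast
  have N: "\<not> fatou_property M \<Phi> (rhoH M \<Phi>)" if "\<not> Delta2 \<Phi>"
    using not_delta2_exists[OF assms(3) assms(1) assms(2) that] rhoH_not_fatou[OF assms(3) assms(1)] by blast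
  have props: "proper_on (orlicz_space M \<Phi>) (rhoH M \<Phi>)" "convex_functional (orlicz_space M \<Phi>) (rhoH M \<Phi>)"
    "quasiconvex_functional (orlicz_space M \<Phi>) (rhoH M \<Phi>)" "law_invariant M (orlicz_space M \<Phi>) (rhoH M \<Phi>)"
    "norm_lsc M \<Phi> (rhoH M \<Phi>)"
    using rhoH_proper rhoH_convex rhoH_quasi rhoH_law rhoH_lsc assms(3) by auto
  show ?thesis using D N props by blast
qed


end
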